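(* Let $G$ be a graph on $[n]$ and $w\in\mathcal E_G$ nonzero. Then $L(w)$ and $R(w)$ are subgraphs of $G$, i.e. if $x_{ij}w=0$ or $wx_{ij}=0$ then $\{i,j\}$ is an edge of $G$.
   Context: Let $n\ge 1$. The Fomin–Kirillov algebra $\mathcal E_n$ is the associative $\mathbb Q$-algebra with generators $x_{ij}$ for ordered pairs of distinct $i,j\in[n]$, subject to $x_{ij}=-x_{ji}$, $x_{ij}^2=0$, $x_{ij}x_{kl}=x_{kl}x_{ij}$ for distinct $i,j,k,l$, and $x_{ij}x_{jk}+x_{jk}x_{ki}+x_{ki}x_{ij}=0$ for distinct $i,j,k$. For a simple graph $G$ on vertex set $[n]$, $\mathcal E_G$ is the subalgebra of $\mathcal E_n$ generated by the $x_{ij}$ with $\{i,j\}$ an edge of $G$. For $w\in\mathcal E_n$, the left descent set $L(w)$ is the graph on $[n]$ with an edge $\{i,j\}$ whenever $x_{ij}w=0$, and the right descent set $R(w)$ is the graph with an edge $\{i,j\}$ whenever $wx_{ij}=0$. *)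

theory Defs
  imports Main "HOL.Rat"
begin

(* Free associative Q-algebra on letters (i,j) :: nat \<times> nat.
   An element is a function from words to coefficients; elements of the
   free algebra are those with finite support. *)
type_synonym fa = "(nat \<times> nat) list \<Rightarrow> rat"

definition fa_finsupp :: "fa \<Rightarrow> bool" where
  "fa_finsupp p \<longleftrightarrow> finite {w. p w \<noteq> 0}"

definition fa_single :: "(nat \<times> nat) list \<Rightarrow> rat \<Rightarrow> fa" where
  "fa_single u c = (\<lambda>w. if w = u then c else 0)"

definition fa_gen :: "nat \<Rightarrow> nat \<Rightarrow> fa" where
  "fa_gen i j = fa_single [(i, j)] 1"

definition fa_mult :: "fa \<Rightarrow> fa \<Rightarrow> fa" where
  "fa_mult p q = (\<lambda>w. \<Sum>(u, v) \<in> {(u, v). u @ v = w}. p u * q v)"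

definition fa_add :: "fa \<Rightarrow> fa \<Rightarrow> fa" where
  "fa_add p q = (\<lambda>w. p w + q w)"

definition fa_smult :: "rat \<Rightarrow> fa \<Rightarrow> fa" where
  "fa_smult c p = (\<lambda>w. c * p w)"

definition fa_zero :: fa where
  "fa_zero = (\<lambda>w. 0)"

(* The two-sided ideal of the free algebra defining the Fomin-Kirillov
   algebra E_n, generated by its defining relations, vertices in {1..n}. *)
inductive fk_ideal :: "nat \<Rightarrow> fa \<Rightarrow> bool" for n :: nat where
  anti: "\<lbrakk>i \<in> {1..n}; j \<in> {1..n}; i \<noteq> j\<rbrakk> \<Longrightarrow>
          fk_ideal n (fa_add (fa_gen i j) (fa_gen j i))"
| sq: "\<lbrakk>i \<in> {1..n}; j \<in> {1..n}; i \<noteq> j\<rbrakk> \<Longrightarrow>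
          fk_ideal n (fa_mult (fa_gen i j) (fa_gen i j))"
| comm: "\<lbrakk>i \<in> {1..n}; j \<in> {1..n}; k \<in> {1..n}; l \<in> {1..n}; distinct [i, j, k, l]\<rbrakk> \<Longrightarrow>
          fk_ideal n (fa_add (fa_mult (fa_gen i j) (fa_gen k l))
                             (fa_smult (-1) (fa_mult (fa_gen k l) (fa_gen i j))))"
| tri: "\<lbrakk>i \<in> {1..n}; j \<in> {1..n}; k \<in> {1..n}; distinct [i, j, k]\<rbrakk> \<Longrightarrow>
          fk_ideal n (fa_add (fa_mult (fa_gen i j) (fa_gen j k))
                       (fa_add (fa_mult (fa_gen j k) (fa_gen k i))
                               (fa_mult (fa_gen k i) (fa_gen i j))))"
| zero: "fk_ideal n fa_zero"
| add: "\<lbrakk>fk_ideal n p; fk_ideal n q\<rbrakk> \<Longrightarrow> fk_ideal n (fa_add p q)"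
| smult: "fk_ideal n p \<Longrightarrow> fk_ideal n (fa_smult c p)"
| mult: "fk_ideal n p \<Longrightarrow>
          fk_ideal n (fa_mult (fa_single u 1) (fa_mult p (fa_single v 1)))"

(* w represents an element of the subalgebra E_G: it is a finite linear
   combination of words all of whose letters x_ij are edges of G. *)
definition in_EG :: "(nat \<Rightarrow> nat \<Rightarrow> bool) \<Rightarrow> fa \<Rightarrow> bool" where
  "in_EG E w \<longleftrightarrow> fa_finsupp w \<and> (\<forall>u. w u \<noteq> 0 \<longrightarrow> (\<forall>(a, b) \<in> set u. E a b))"

definition simple_graph_on :: "nat \<Rightarrow> (nat \<Rightarrow> nat \<Rightarrow> bool) \<Rightarrow> bool" where
  "simple_graph_on n E \<longleftrightarrow> (\<forall>i j. E i j \<longrightarrow> E j i) \<and> (\<forall>i. \<not> E i i)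
     \<and> (\<forall>i j. E i j \<longrightarrow> i \<in> {1..n} \<and> j \<in> {1..n})"

end

theory Submission
  imports Defs
begin


lemma sum_lessThan_add_nat: "(\<Sum>k<a+b. f k) = (\<Sum>k<a. f k) + (\<Sum>k<b. f (a+k))" for f :: "nat \<Rightarrow> 'b::comm_monoid_add"
  by (induction b) (simp_all add: add.assoc)

lemma splits_eq: "{(x, y). x @ y = w} = (\<lambda>k. (take k w, drop k w)) ` {..length w}"
proof (intro set_eqI iffI)
  fix z assume "z \<in> {(x, y). x @ y = w}"
  then obtain x y where z: "z = (x,y)" "x @ y = w" by auto
  then show "z \<in> (\<lambda>k. (take k w, drop k w)) ` {..length w}"
    by (intro image_eqI[where x="length x"]) auto
qed auto

lemma sum_splits: "(\<Sum>(x, y)\<in>{(x, y). x @ y = w}. f x y) = (\<Sum>k\<in>{..length w}. f (take k w) (drop k w))"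
  unfolding splits_eq
  apply (subst sum.reindex)
   apply (rule inj_onI) apply (auto simp: min_def)
  by (metis length_take min.absorb2)

lemma take_eq_len: "k \<le> length w \<Longrightarrow> (take k w = u) = (k = length u \<and> take (length u) w = u)"
  by auto

lemma mult_single_left:
  "fa_mult (fa_single u c) q w = (if take (length u) w = u then c * q (drop (length u) w) else 0)"
proof -
  have "fa_mult (fa_single u c) q w = (\<Sum>k\<in>{..length w}. (if take k w = u then c else 0) * q (drop k w))"
    unfolding fa_mult_def fa_single_def by (simp add: sum_splits)
  also have "\<dots> = (\<Sum>k\<in>{..length w}. if k = length u then (if take (length u) w = u then c * q (drop (length u) w) else 0) else 0)"
    apply (rule sum.cong, simp)
    subgoal for k using take_eq_len[of k w u] by auto
    done
  also have "\<dots> = (if take (length u) w = u then c * q (drop (length u) w) else 0)"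
    by (auto simp: sum.delta)
  finally show ?thesis .
qed

lemma mult_single_right:
  "fa_mult q (fa_single v c) w = (if drop (length w - length v) w = v then q (take (length w - length v) w) * c else 0)"
proof -
  have "fa_mult q (fa_single v c) w = (\<Sum>k\<in>{..length w}. q (take k w) * (if drop k w = v then c else 0))"
    unfolding fa_mult_def fa_single_def by (simp add: sum_splits)
  also have "\<dots> = (\<Sum>k\<in>{..length w}. if k = length w - length v then (if drop (length w - length v) w = v then q (take (length w - length v) w) * c else 0) else 0)"
    by (rule sum.cong) auto
  also have "\<dots> = (if drop (length w - length v) w = v then q (take (length w - length v) w) * c else 0)"
    by (auto simp: sum.delta)
  finally show ?thesis .
qed

lemma mult_single_single: "fa_mult (fa_single u a) (fa_single v b) = fa_single (u @ v) (a * b)"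
proof (rule ext)
  fix w show "fa_mult (fa_single u a) (fa_single v b) w = fa_single (u @ v) (a * b) w"
    apply (simp only: mult_single_left)
    apply (simp add: fa_single_def)
    by (metis append_eq_conv_conj)
qed

definition Mf :: "(nat \<times> nat) list \<Rightarrow> (nat \<times> nat) list \<Rightarrow> fa \<Rightarrow> fa" where
  "Mf u v p = (\<lambda>w. if \<exists>m. w = u @ m @ v then p (drop (length u) (take (length w - length v) w)) else 0)"

lemma Mf_app[simp]: "Mf u v p (u @ m @ v) = p m"
  by (auto simp: Mf_def)

lemma Mf_not: "\<not> (\<exists>m. w = u @ m @ v) \<Longrightarrow> Mf u v p w = 0"
  by (auto simp: Mf_def)

lemma Mf_eq: "fa_mult (fa_single u 1) (fa_mult p (fa_single v 1)) = Mf u v p"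
proof (rule ext)
  fix w
  show "fa_mult (fa_single u 1) (fa_mult p (fa_single v 1)) w = Mf u v p w"
  proof (cases "\<exists>m. w = u @ m @ v")
    case True
    then obtain m where "w = u @ m @ v" by auto
    then show ?thesis by (simp add: mult_single_left mult_single_right)
  next
    case False
    then show ?thesis
    proof -
      let ?w' = "drop (length u) w"
      have "fa_mult (fa_single u 1) (fa_mult p (fa_single v 1)) w =
        (if take (length u) w = u then (if drop (length ?w' - length v) ?w' = v then p (take (length ?w' - length v) ?w') else 0) else 0)"
        by (simp only: mult_single_left mult_single_right) simp
      also have "\<dots> = 0"
      proof (cases "take (length u) w = u \<and> drop (length ?w' - length v) ?w' = v")
        case True
        then have "w = u @ take (length ?w' - length v) ?w' @ v"
          by (metis append_take_drop_id)
        with False show ?thesis by blast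
      qed auto
      finally show ?thesis using False by (simp add: Mf_not)
    qed
  qed
qed



lemma fa_gen_single: "fa_gen a b = fa_single [(a,b)] 1" by (simp add: fa_gen_def)

lemma gen_mult: "fa_mult (fa_gen a b) (fa_gen c d) = fa_single [(a,b),(c,d)] 1"
  by (simp add: fa_gen_def mult_single_single)

lemma ideal_Mf: "fk_ideal n p \<Longrightarrow> fk_ideal n (Mf u v p)"
  using fk_ideal.mult[of n p u v] by (simp add: Mf_eq)

lemma finsupp_single: "fa_finsupp (fa_single u c)"
proof -
  have "{w. fa_single u c w \<noteq> 0} \<subseteq> {u}" by (auto simp: fa_single_def)
  then show ?thesis unfolding fa_finsupp_def by (rule finite_subset) simp
qed

lemma finsupp_add: "fa_finsupp p \<Longrightarrow> fa_finsupp q \<Longrightarrow> fa_finsupp (fa_add p q)"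
proof -
  assume a: "fa_finsupp p" "fa_finsupp q"
  have "{w. fa_add p q w \<noteq> 0} \<subseteq> {w. p w \<noteq> 0} \<union> {w. q w \<noteq> 0}"
    by (auto simp: fa_add_def)
  then show ?thesis using a unfolding fa_finsupp_def by (meson finite_Un finite_subset)
qed

lemma finsupp_smult: "fa_finsupp p \<Longrightarrow> fa_finsupp (fa_smult c p)"
proof -
  assume a: "fa_finsupp p"
  have "{w. fa_smult c p w \<noteq> 0} \<subseteq> {w. p w \<noteq> 0}"
    by (auto simp: fa_smult_def)
  then show ?thesis using a unfolding fa_finsupp_def by (meson finite_subset)
qed

lemma ideal_finsupp: "fk_ideal n p \<Longrightarrow> fa_finsupp p"
proof (induction rule: fk_ideal.induct)
  case (mult p u v)
  have "{w. Mf u v p w \<noteq> 0} \<subseteq> (\<lambda>m. u @ m @ v) ` {w. p w \<noteq> 0}"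
  proof
    fix w assume "w \<in> {w. Mf u v p w \<noteq> 0}"
    then obtain m where "w = u @ m @ v" "Mf u v p w \<noteq> 0" by (metis (mono_tags) Mf_not mem_Collect_eq)
    then show "w \<in> (\<lambda>m. u @ m @ v) ` {w. p w \<noteq> 0}" by auto
  qed
  then show ?case using mult unfolding fa_finsupp_def Mf_eq by (meson finite_imageI finite_subset)
next
  case zero
  then show ?case by (simp add: fa_finsupp_def fa_zero_def)
qed (simp_all add: finsupp_single finsupp_add finsupp_smult mult_single_single fa_gen_single)

lemma ideal_sum: "finite K \<Longrightarrow> (\<And>k. k \<in> K \<Longrightarrow> fk_ideal n (f k)) \<Longrightarrow> fk_ideal n (\<lambda>w. \<Sum>k\<in>K. f k w)"
proof (induction K rule: finite_induct)
  case empty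
  then show ?case using fk_ideal.zero by (simp add: fa_zero_def)
next
  case (insert x F)
  have "(\<lambda>w. \<Sum>k\<in>insert x F. f k w) = fa_add (f x) (\<lambda>w. \<Sum>k\<in>F. f k w)"
    using insert by (simp add: fa_add_def)
  then show ?case using insert by (simp add: fk_ideal.add)
qed

lemma ideal_smult': "fk_ideal n p \<Longrightarrow> fk_ideal n (\<lambda>w. c * p w)"
  using fk_ideal.smult[of n p c] by (simp add: fa_smult_def)

lemma ideal_add': "fk_ideal n p \<Longrightarrow> fk_ideal n q \<Longrightarrow> fk_ideal n (\<lambda>w. p w + q w)"
  using fk_ideal.add[of n p q] by (simp add: fa_add_def)

lemma ideal_zero': "fk_ideal n (\<lambda>w. 0)"
  using fk_ideal.zero by (simp add: fa_zero_def)



definition sw :: "nat \<Rightarrow> nat \<Rightarrow> nat \<Rightarrow> nat" where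
  "sw i j x = (if x = i then j else if x = j then i else x)"

definition sl :: "nat \<Rightarrow> nat \<Rightarrow> nat \<times> nat \<Rightarrow> nat \<times> nat" where
  "sl i j = (\<lambda>(a, b). (sw i j a, sw i j b))"

lemma sw_sw[simp]: "sw i j (sw i j x) = x" by (simp add: sw_def)
lemma sl_sl[simp]: "sl i j (sl i j x) = x" by (cases x) (simp add: sl_def)
lemma sl_pair[simp]: "sl i j (a, b) = (sw i j a, sw i j b)" by (simp add: sl_def)
lemma sl_comp[simp]: "sl i j \<circ> sl i j = id" by (rule ext) simp
lemma map_sl_sl[simp]: "map (sl i j) (map (sl i j) x) = x" by (induction x) auto
lemma sw_inj[simp]: "(sw i j a = sw i j b) = (a = b)" by (metis sw_sw)
lemma map_sl_eq: "(map (sl i j) w = x) = (w = map (sl i j) x)" by auto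
lemma sw_range: "i \<in> {1..n} \<Longrightarrow> j \<in> {1..n} \<Longrightarrow> a \<in> {1..n} \<Longrightarrow> sw i j a \<in> {1..n}"
  by (simp add: sw_def)

lemma single_sl: "fa_single u c (map (sl i j) w) = fa_single (map (sl i j) u) c w"
  by (auto simp: fa_single_def)

lemma Mf_sl: "(\<lambda>w. Mf u v p (map (sl i j) w)) = Mf (map (sl i j) u) (map (sl i j) v) (\<lambda>w. p (map (sl i j) w))"
proof (rule ext)
  fix w
  show "Mf u v p (map (sl i j) w) = Mf (map (sl i j) u) (map (sl i j) v) (\<lambda>w. p (map (sl i j) w)) w"
  proof (cases "\<exists>m. w = map (sl i j) u @ m @ map (sl i j) v")
    case True
    then obtain m where m: "w = map (sl i j) u @ m @ map (sl i j) v" by auto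
    then have "map (sl i j) w = u @ map (sl i j) m @ v" by simp
    then show ?thesis using m by simp
  next
    case False
    have "\<not> (\<exists>m. map (sl i j) w = u @ m @ v)"
    proof
      assume "\<exists>m. map (sl i j) w = u @ m @ v"
      then obtain m where "map (sl i j) w = u @ m @ v" by auto
      then have "w = map (sl i j) u @ map (sl i j) m @ map (sl i j) v"
        by (metis map_append map_sl_sl)
      with False show False by blast
    qed
    then show ?thesis using False by (simp add: Mf_not)
  qed
qed

lemma S_ideal:
  assumes ij: "i \<in> {1..n}" "j \<in> {1..n}"
  shows "fk_ideal n p \<Longrightarrow> fk_ideal n (\<lambda>w. p (map (sl i j) w))"
proof (induction rule: fk_ideal.induct)
  case (anti a b)
  have "(\<lambda>w. fa_add (fa_gen a b) (fa_gen b a) (map (sl i j) w)) = fa_add (fa_gen (sw i j a) (sw i j b)) (fa_gen (sw i j b) (sw i j a))"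
    by (rule ext) (simp add: fa_add_def fa_gen_single single_sl)
  then show ?case using anti ij by (auto intro!: fk_ideal.anti sw_range)
next
  case (sq a b)
  have "(\<lambda>w. fa_mult (fa_gen a b) (fa_gen a b) (map (sl i j) w)) = fa_mult (fa_gen (sw i j a) (sw i j b)) (fa_gen (sw i j a) (sw i j b))"
    by (rule ext) (simp add: gen_mult single_sl)
  then show ?case using sq ij by (auto intro!: fk_ideal.sq sw_range)
next
  case (comm a b c d)
  have "(\<lambda>w. fa_add (fa_mult (fa_gen a b) (fa_gen c d))
                             (fa_smult (-1) (fa_mult (fa_gen c d) (fa_gen a b))) (map (sl i j) w)) =
   fa_add (fa_mult (fa_gen (sw i j a) (sw i j b)) (fa_gen (sw i j c) (sw i j d)))
                             (fa_smult (-1) (fa_mult (fa_gen (sw i j c) (sw i j d)) (fa_gen (sw i j a) (sw i j b))))"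
    by (rule ext) (simp add: gen_mult single_sl fa_add_def fa_smult_def)
  then show ?case using comm ij by (auto intro!: fk_ideal.comm sw_range)
next
  case (tri a b c)
  have "(\<lambda>w. fa_add (fa_mult (fa_gen a b) (fa_gen b c))
                       (fa_add (fa_mult (fa_gen b c) (fa_gen c a))
                               (fa_mult (fa_gen c a) (fa_gen a b))) (map (sl i j) w)) =
     fa_add (fa_mult (fa_gen (sw i j a) (sw i j b)) (fa_gen (sw i j b) (sw i j c)))
                       (fa_add (fa_mult (fa_gen (sw i j b) (sw i j c)) (fa_gen (sw i j c) (sw i j a)))
                               (fa_mult (fa_gen (sw i j c) (sw i j a)) (fa_gen (sw i j a) (sw i j b))))"
    by (rule ext) (simp add: gen_mult single_sl fa_add_def)
  then show ?case using tri ij by (auto intro!: fk_ideal.tri sw_range)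
next
  case zero
  then show ?case by (simp add: fa_zero_def ideal_zero')
next
  case (add p q)
  then show ?case by (simp add: fa_add_def ideal_add')
next
  case (smult p c)
  then show ?case by (simp add: fa_smult_def ideal_smult')
next
  case (mult p u v)
  then show ?case by (simp add: Mf_eq Mf_sl ideal_Mf)
qed

definition rw :: "(nat \<times> nat) list \<Rightarrow> (nat \<times> nat) list" where
  "rw w = rev (map (\<lambda>(a, b). (b, a)) w)"

lemma rw_rw[simp]: "rw (rw w) = w"
  by (simp add: rw_def rev_map case_prod_beta comp_def)
lemma rw_append[simp]: "rw (x @ y) = rw y @ rw x" by (simp add: rw_def)
lemma rw_Nil[simp]: "rw [] = []" by (simp add: rw_def)
lemma rw_single_l[simp]: "rw [(a, b)] = [(b, a)]" by (simp add: rw_def)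
lemma rw_two[simp]: "rw [(a, b), (c, d)] = [(d, c), (b, a)]" by (simp add: rw_def)
lemma rw_eq: "(rw w = x) = (w = rw x)" by auto

lemma single_rw: "fa_single u c (rw w) = fa_single (rw u) c w"
  by (auto simp: fa_single_def)

lemma Mf_rw: "(\<lambda>w. Mf u v p (rw w)) = Mf (rw v) (rw u) (\<lambda>w. p (rw w))"
proof (rule ext)
  fix w
  show "Mf u v p (rw w) = Mf (rw v) (rw u) (\<lambda>w. p (rw w)) w"
  proof (cases "\<exists>m. w = rw v @ m @ rw u")
    case True
    then obtain m where m: "w = rw v @ m @ rw u" by auto
    then have "rw w = u @ rw m @ v" by simp
    then show ?thesis using m by simp
  next
    case False
    have "\<not> (\<exists>m. rw w = u @ m @ v)"
    proof
      assume "\<exists>m. rw w = u @ m @ v"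
      then obtain m where "rw w = u @ m @ v" by auto
      then have "w = rw v @ rw m @ rw u"
        by (metis append.assoc rw_append rw_rw)
      with False show False by blast
    qed
    then show ?thesis using False by (simp add: Mf_not)
  qed
qed

lemma R_ideal: "fk_ideal n p \<Longrightarrow> fk_ideal n (\<lambda>w. p (rw w))"
proof (induction rule: fk_ideal.induct)
  case (anti a b)
  have "(\<lambda>w. fa_add (fa_gen a b) (fa_gen b a) (rw w)) = fa_add (fa_gen b a) (fa_gen a b)"
    by (rule ext) (simp add: fa_add_def fa_gen_single single_rw)
  then show ?case using anti by (simp add: fk_ideal.anti)
next
  case (sq a b)
  have "(\<lambda>w. fa_mult (fa_gen a b) (fa_gen a b) (rw w)) = fa_mult (fa_gen b a) (fa_gen b a)"
    by (rule ext) (simp add: gen_mult single_rw)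
  then show ?case using sq by (simp add: fk_ideal.sq)
next
  case (comm a b c d)
  have "(\<lambda>w. fa_add (fa_mult (fa_gen a b) (fa_gen c d))
                             (fa_smult (-1) (fa_mult (fa_gen c d) (fa_gen a b))) (rw w)) =
   fa_add (fa_mult (fa_gen d c) (fa_gen b a))
                             (fa_smult (-1) (fa_mult (fa_gen b a) (fa_gen d c)))"
    by (rule ext) (simp add: gen_mult single_rw fa_add_def fa_smult_def)
  then show ?case using comm by (auto intro!: fk_ideal.comm)
next
  case (tri a b c)
  have "(\<lambda>w. fa_add (fa_mult (fa_gen a b) (fa_gen b c))
                       (fa_add (fa_mult (fa_gen b c) (fa_gen c a))
                               (fa_mult (fa_gen c a) (fa_gen a b))) (rw w)) =
     fa_add (fa_mult (fa_gen c b) (fa_gen b a))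
                       (fa_add (fa_mult (fa_gen b a) (fa_gen a c))
                               (fa_mult (fa_gen a c) (fa_gen c b)))"
    by (rule ext) (simp add: gen_mult single_rw fa_add_def)
  then show ?case using tri by (auto intro!: fk_ideal.tri)
next
  case zero
  then show ?case by (simp add: fa_zero_def ideal_zero')
next
  case (add p q)
  then show ?case by (simp add: fa_add_def ideal_add')
next
  case (smult p c)
  then show ?case by (simp add: fa_smult_def ideal_smult')
next
  case (mult p u v)
  then show ?case by (simp add: Mf_eq Mf_rw ideal_Mf)
qed



definition eps :: "nat \<Rightarrow> nat \<Rightarrow> nat \<times> nat \<Rightarrow> rat" where
  "eps i j x = (if x = (i, j) then 1 else if x = (j, i) then -1 else 0)"

definition dv :: "nat \<Rightarrow> nat \<Rightarrow> (nat \<times> nat) list \<Rightarrow> (nat \<times> nat) list \<Rightarrow> (nat \<times> nat) list \<Rightarrow> (nat \<times> nat) list \<Rightarrow> rat" where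
  "dv i j x pre post w = (\<Sum>k<length x. if w = pre @ take k x @ map (sl i j) (drop (Suc k) x) @ post then eps i j (x ! k) else 0)"

definition Dop :: "nat \<Rightarrow> nat \<Rightarrow> fa \<Rightarrow> fa" where
  "Dop i j p = (\<lambda>w. \<Sum>u\<in>{u. p u \<noteq> 0}. p u * dv i j u [] [] w)"

lemma dv_append: "dv i j (x @ y) pre post w = dv i j x pre (map (sl i j) y @ post) w + dv i j y (pre @ x) post w"
  unfolding dv_def
  apply (simp add: sum_lessThan_add_nat)
  apply (intro arg_cong2[where f="(+)"] sum.cong refl)
   apply (auto simp: nth_append)
  done

lemma dv_shift: "dv i j m pre post (pre @ r @ post) = dv i j m [] [] r"
  unfolding dv_def by (rule sum.cong) auto

lemma dv_zero: "\<not> (\<exists>r. w = pre @ r @ post) \<Longrightarrow> dv i j m pre post w = 0"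
  unfolding dv_def by (rule sum.neutral) auto

lemma D_eq: "finite F \<Longrightarrow> {u. p u \<noteq> 0} \<subseteq> F \<Longrightarrow> Dop i j p w = (\<Sum>u\<in>F. p u * dv i j u [] [] w)"
  unfolding Dop_def by (rule sum.mono_neutral_left) auto

lemma sum_pick:
  assumes "finite F" "{m. p m \<noteq> 0} \<subseteq> F" "\<And>x. g (g x) = x"
  shows "(\<Sum>m\<in>F. if w = A @ g m @ B then p m else 0) = Mf A B (\<lambda>x. p (g x)) w"
proof (cases "\<exists>r. w = A @ r @ B")
  case True
  then obtain r where r: "w = A @ r @ B" by auto
  have "(\<Sum>m\<in>F. if w = A @ g m @ B then p m else 0) = (\<Sum>m\<in>F. if m = g r then p m else 0)"
  proof (rule sum.cong)
    fix m
    have "(A @ g m @ B = A @ r @ B) = (m = g r)" using assms(3) by (metis same_append_eq append_same_eq)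
    then show "(if w = A @ g m @ B then p m else 0) = (if m = g r then p m else 0)" by (simp add: r assms(3))
  qed simp
  also have "\<dots> = p (g r)" using assms by (auto simp: sum.delta)
  finally show ?thesis using r by simp
next
  case False
  then show ?thesis by (auto simp: Mf_not intro!: sum.neutral)
qed



lemma sum_if_mult: "(\<Sum>m\<in>P. p m * (if C m then e else 0)) = (e::rat) * (\<Sum>m\<in>P. if C m then p m else 0)"
  by (simp add: sum_distrib_left) (rule sum.cong, auto)

lemma D_Mf:
  assumes fp: "fa_finsupp p"
  shows "Dop i j (Mf u v p) w =
    (\<Sum>k<length u. eps i j (u!k) * Mf (take k u @ map (sl i j) (drop (Suc k) u)) (map (sl i j) v) (\<lambda>x. p (map (sl i j) x)) w)
    + Mf u (map (sl i j) v) (Dop i j p) w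
    + (\<Sum>k<length v. eps i j (v!k) * Mf u (take k v @ map (sl i j) (drop (Suc k) v)) p w)"
proof -
  let ?P = "{m. p m \<noteq> 0}"
  have fP: "finite ?P" using fp by (simp add: fa_finsupp_def)
  have sub: "{x. Mf u v p x \<noteq> 0} \<subseteq> (\<lambda>m. u @ m @ v) ` ?P"
  proof
    fix x assume "x \<in> {x. Mf u v p x \<noteq> 0}"
    then obtain m where "x = u @ m @ v" "Mf u v p x \<noteq> 0" by (metis (mono_tags) Mf_not mem_Collect_eq)
    then show "x \<in> (\<lambda>m. u @ m @ v) ` ?P" by auto
  qed
  have "Dop i j (Mf u v p) w = (\<Sum>x\<in>(\<lambda>m. u @ m @ v) ` ?P. Mf u v p x * dv i j x [] [] w)"
    by (rule D_eq) (use fP sub in auto)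
  also have "\<dots> = (\<Sum>m\<in>?P. p m * dv i j (u @ m @ v) [] [] w)"
    by (subst sum.reindex) (auto simp: inj_on_def)
  also have "\<dots> = (\<Sum>m\<in>?P. p m * dv i j u [] (map (sl i j) m @ map (sl i j) v) w)
       + (\<Sum>m\<in>?P. p m * dv i j m u (map (sl i j) v) w) + (\<Sum>m\<in>?P. p m * dv i j v (u @ m) [] w)"
    by (simp add: dv_append sum.distrib distrib_left)
  also have "(\<Sum>m\<in>?P. p m * dv i j u [] (map (sl i j) m @ map (sl i j) v) w) =
     (\<Sum>k<length u. eps i j (u!k) * Mf (take k u @ map (sl i j) (drop (Suc k) u)) (map (sl i j) v) (\<lambda>x. p (map (sl i j) x)) w)"
  proof -
    have "(\<Sum>m\<in>?P. p m * dv i j u [] (map (sl i j) m @ map (sl i j) v) w) =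
      (\<Sum>k<length u. \<Sum>m\<in>?P. p m * (if w = take k u @ map (sl i j) (drop (Suc k) u) @ map (sl i j) m @ map (sl i j) v then eps i j (u ! k) else 0))"
      unfolding dv_def by (simp add: sum_distrib_left) (rule sum.swap)
    also have "\<dots> = (\<Sum>k<length u. eps i j (u!k) * Mf (take k u @ map (sl i j) (drop (Suc k) u)) (map (sl i j) v) (\<lambda>x. p (map (sl i j) x)) w)"
    proof (rule sum.cong, simp)
      fix k
      show "(\<Sum>m\<in>?P. p m * (if w = take k u @ map (sl i j) (drop (Suc k) u) @ map (sl i j) m @ map (sl i j) v then eps i j (u ! k) else 0))
        = eps i j (u!k) * Mf (take k u @ map (sl i j) (drop (Suc k) u)) (map (sl i j) v) (\<lambda>x. p (map (sl i j) x)) w"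
        unfolding sum_if_mult
        using sum_pick[of ?P p "map (sl i j)" w "take k u @ map (sl i j) (drop (Suc k) u)" "map (sl i j) v"] fP by simp
    qed
    finally show ?thesis .
  qed
  also have "(\<Sum>m\<in>?P. p m * dv i j m u (map (sl i j) v) w) = Mf u (map (sl i j) v) (Dop i j p) w"
  proof (cases "\<exists>r. w = u @ r @ map (sl i j) v")
    case True
    then obtain r where r: "w = u @ r @ map (sl i j) v" by auto
    then show ?thesis by (simp add: dv_shift Dop_def)
  next
    case False
    then show ?thesis by (simp add: dv_zero Mf_not)
  qed
  also have "(\<Sum>m\<in>?P. p m * dv i j v (u @ m) [] w) =
     (\<Sum>k<length v. eps i j (v!k) * Mf u (take k v @ map (sl i j) (drop (Suc k) v)) p w)"
  proof -
    have "(\<Sum>m\<in>?P. p m * dv i j v (u @ m) [] w) =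
      (\<Sum>k<length v. \<Sum>m\<in>?P. p m * (if w = u @ m @ take k v @ map (sl i j) (drop (Suc k) v) then eps i j (v ! k) else 0))"
      unfolding dv_def by (simp add: sum_distrib_left) (rule sum.swap)
    also have "\<dots> = (\<Sum>k<length v. eps i j (v!k) * Mf u (take k v @ map (sl i j) (drop (Suc k) v)) p w)"
    proof (rule sum.cong, simp)
      fix k
      show "(\<Sum>m\<in>?P. p m * (if w = u @ m @ take k v @ map (sl i j) (drop (Suc k) v) then eps i j (v ! k) else 0))
        = eps i j (v!k) * Mf u (take k v @ map (sl i j) (drop (Suc k) v)) p w"
        unfolding sum_if_mult
        using sum_pick[of ?P p "\<lambda>x. x" w u "take k v @ map (sl i j) (drop (Suc k) v)"] fP by simp
    qed
    finally show ?thesis .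
  qed
  finally show ?thesis .
qed



lemma D_add: "fa_finsupp p \<Longrightarrow> fa_finsupp q \<Longrightarrow> Dop i j (fa_add p q) = fa_add (Dop i j p) (Dop i j q)"
proof (rule ext)
  fix w assume fp: "fa_finsupp p" and fq: "fa_finsupp q"
  let ?F = "{u. p u \<noteq> 0} \<union> {u. q u \<noteq> 0}"
  have fF: "finite ?F" using fp fq by (simp add: fa_finsupp_def)
  have "Dop i j (fa_add p q) w = (\<Sum>u\<in>?F. fa_add p q u * dv i j u [] [] w)"
    by (rule D_eq) (use fF in \<open>auto simp: fa_add_def\<close>)
  also have "\<dots> = (\<Sum>u\<in>?F. p u * dv i j u [] [] w) + (\<Sum>u\<in>?F. q u * dv i j u [] [] w)"
    by (simp add: fa_add_def sum.distrib distrib_right)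
  also have "\<dots> = Dop i j p w + Dop i j q w"
    using D_eq[of ?F p i j w] D_eq[of ?F q i j w] fF by auto
  finally show "Dop i j (fa_add p q) w = fa_add (Dop i j p) (Dop i j q) w" by (simp add: fa_add_def)
qed

lemma D_smult: "fa_finsupp p \<Longrightarrow> Dop i j (fa_smult c p) = fa_smult c (Dop i j p)"
proof (rule ext)
  fix w assume fp: "fa_finsupp p"
  let ?F = "{u. p u \<noteq> 0}"
  have fF: "finite ?F" using fp by (simp add: fa_finsupp_def)
  have "Dop i j (fa_smult c p) w = (\<Sum>u\<in>?F. fa_smult c p u * dv i j u [] [] w)"
    by (rule D_eq) (use fF in \<open>auto simp: fa_smult_def\<close>)
  also have "\<dots> = c * Dop i j p w"
    using D_eq[of ?F p i j w] fF by (simp add: fa_smult_def sum_distrib_left mult.assoc)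
  finally show "Dop i j (fa_smult c p) w = fa_smult c (Dop i j p) w" by (simp add: fa_smult_def)
qed

lemma D_single: "Dop i j (fa_single u c) = (\<lambda>w. c * dv i j u [] [] w)"
proof (rule ext)
  fix w
  have "Dop i j (fa_single u c) w = (\<Sum>x\<in>{u}. fa_single u c x * dv i j x [] [] w)"
    by (rule D_eq) (auto simp: fa_single_def)
  then show "Dop i j (fa_single u c) w = c * dv i j u [] [] w" by (simp add: fa_single_def)
qed

lemma dv1: "dv i j [x] [] [] w = (if w = [] then eps i j x else 0)"
  by (simp add: dv_def)

lemma dv2: "dv i j [x, y] [] [] w = (if w = [sl i j y] then eps i j x else 0) + (if w = [x] then eps i j y else 0)"
  by (simp add: dv_def numeral_2_eq_2 lessThan_Suc)

lemma eps_nz: "eps i j (a, b) \<noteq> 0 \<Longrightarrow> (a = i \<and> b = j) \<or> (a = j \<and> b = i)"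
  by (auto simp: eps_def split: if_splits)

lemma eps_flip: "eps i j (a, b) \<noteq> 0 \<Longrightarrow> sw i j a = b \<and> sw i j b = a"
  by (auto simp: eps_def sw_def split: if_splits)

lemma eps_fix: "eps i j (a, b) \<noteq> 0 \<Longrightarrow> c \<noteq> a \<Longrightarrow> c \<noteq> b \<Longrightarrow> sw i j c = c"
  by (auto simp: eps_def sw_def split: if_splits)

lemma eps_swap: "i \<noteq> j \<Longrightarrow> eps i j (b, a) = - eps i j (a, b)"
  by (auto simp: eps_def)

lemma if_mult1: "(e::rat) * (if P then 1 else 0) = (if P then e else 0)" by simp

lemma ifcong: "(e \<noteq> 0 \<Longrightarrow> X = Y) \<Longrightarrow> (if w = X then e else (0::rat)) = (if w = Y then e else 0)"
  by auto

lemma D_ideal: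
  assumes ij: "i \<in> {1..n}" "j \<in> {1..n}" "i \<noteq> j"
  shows "fk_ideal n p \<Longrightarrow> fk_ideal n (Dop i j p)"
proof (induction rule: fk_ideal.induct)
  case (anti a b)
  have "Dop i j (fa_add (fa_gen a b) (fa_gen b a)) = (\<lambda>w. 0)"
    using ij by (simp only: fa_gen_single D_add[OF finsupp_single finsupp_single] D_single)
      (rule ext, simp add: fa_add_def dv1 eps_swap[OF ij(3), of b a])
  then show ?case by (simp add: ideal_zero')
next
  case (sq a b)
  have "Dop i j (fa_mult (fa_gen a b) (fa_gen a b)) = fa_smult (eps i j (a, b)) (fa_add (fa_gen a b) (fa_gen b a))"
  proof (rule ext)
    fix w
    have h: "(if w = [sl i j (a, b)] then eps i j (a, b) else 0) = (if w = [(b, a)] then eps i j (a, b) else 0)"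
      by (rule ifcong) (use eps_flip[of i j a b] in simp)
    then show "Dop i j (fa_mult (fa_gen a b) (fa_gen a b)) w = fa_smult (eps i j (a, b)) (fa_add (fa_gen a b) (fa_gen b a)) w"
      apply (simp only: gen_mult D_single dv2 h)
      apply (simp only: fa_smult_def fa_add_def fa_gen_single fa_single_def)
      using sq(3) by auto
  qed
  then show ?case using sq by (simp add: fk_ideal.anti fk_ideal.smult)
next
  case (comm a b c d)
  have "Dop i j (fa_add (fa_mult (fa_gen a b) (fa_gen c d)) (fa_smult (- 1) (fa_mult (fa_gen c d) (fa_gen a b)))) = (\<lambda>w. 0)"
  proof (rule ext)
    fix w
    have 1: "(if w = [sl i j (c, d)] then eps i j (a, b) else 0) = (if w = [(c, d)] then eps i j (a, b) else 0)"
      by (rule ifcong) (use eps_fix[of i j a b c] eps_fix[of i j a b d] comm in simp)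
    have 2: "(if w = [sl i j (a, b)] then eps i j (c, d) else 0) = (if w = [(a, b)] then eps i j (c, d) else 0)"
      by (rule ifcong) (use eps_fix[of i j c d a] eps_fix[of i j c d b] comm in simp)
    show "Dop i j (fa_add (fa_mult (fa_gen a b) (fa_gen c d)) (fa_smult (- 1) (fa_mult (fa_gen c d) (fa_gen a b)))) w = 0"
      apply (simp only: gen_mult D_add[OF finsupp_single finsupp_smult[OF finsupp_single]] D_smult[OF finsupp_single] D_single dv2 1 2)
      apply (simp only: fa_smult_def fa_add_def)
      apply (subst 1, subst 2)
      by (simp add: algebra_simps)
  qed
  then show ?case by (simp add: ideal_zero')
next
  case (tri a b c)
  let ?ea = "eps i j (a, b)" and ?eb = "eps i j (b, c)" and ?ec = "eps i j (c, a)"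
  have "Dop i j (fa_add (fa_mult (fa_gen a b) (fa_gen b c))
                       (fa_add (fa_mult (fa_gen b c) (fa_gen c a))
                               (fa_mult (fa_gen c a) (fa_gen a b)))) =
        fa_add (fa_smult ?ea (fa_add (fa_gen a c) (fa_gen c a)))
          (fa_add (fa_smult ?eb (fa_add (fa_gen a b) (fa_gen b a))) (fa_smult ?ec (fa_add (fa_gen b c) (fa_gen c b))))"
  proof (rule ext)
    fix w
    have 1: "(if w = [sl i j (b, c)] then ?ea else 0) = (if w = [(a, c)] then ?ea else 0)"
      by (rule ifcong) (use eps_flip[of i j a b] eps_fix[of i j a b c] tri in simp)
    have 2: "(if w = [sl i j (c, a)] then ?eb else 0) = (if w = [(b, a)] then ?eb else 0)"
      by (rule ifcong) (use eps_flip[of i j b c] eps_fix[of i j b c a] tri in simp)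
    have 3: "(if w = [sl i j (a, b)] then ?ec else 0) = (if w = [(c, b)] then ?ec else 0)"
      by (rule ifcong) (use eps_flip[of i j c a] eps_fix[of i j c a b] tri in simp)
    show "Dop i j (fa_add (fa_mult (fa_gen a b) (fa_gen b c))
                       (fa_add (fa_mult (fa_gen b c) (fa_gen c a))
                               (fa_mult (fa_gen c a) (fa_gen a b)))) w =
        fa_add (fa_smult ?ea (fa_add (fa_gen a c) (fa_gen c a)))
          (fa_add (fa_smult ?eb (fa_add (fa_gen a b) (fa_gen b a))) (fa_smult ?ec (fa_add (fa_gen b c) (fa_gen c b)))) w"
      apply (simp only: gen_mult D_add[OF finsupp_single finsupp_add[OF finsupp_single finsupp_single]] D_add[OF finsupp_single finsupp_single] D_single dv2)
      apply (simp only: fa_smult_def fa_add_def fa_gen_single fa_single_def)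
      apply (subst 1, subst 2, subst 3)
      by (simp add: algebra_simps if_mult1)
  qed
  moreover have A1: "fk_ideal n (fa_add (fa_gen a c) (fa_gen c a))" by (rule fk_ideal.anti) (use tri in auto)
  moreover have A2: "fk_ideal n (fa_add (fa_gen a b) (fa_gen b a))" by (rule fk_ideal.anti) (use tri in auto)
  moreover have A3: "fk_ideal n (fa_add (fa_gen b c) (fa_gen c b))" by (rule fk_ideal.anti) (use tri in auto)
  ultimately show ?case
    by (metis fk_ideal.add fk_ideal.smult)
next
  case zero
  have "Dop i j fa_zero = (\<lambda>w. 0)" by (simp add: Dop_def fa_zero_def)
  then show ?case by (simp add: ideal_zero')
next
  case (add p q)
  then show ?case by (simp add: D_add ideal_finsupp fk_ideal.add)
next
  case (smult p c)
  then show ?case by (simp add: D_smult ideal_finsupp fk_ideal.smult)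
next
  case (mult p u v)
  have fp: "fa_finsupp p" using mult ideal_finsupp by blast
  have S: "fk_ideal n (\<lambda>x. p (map (sl i j) x))" using S_ideal[OF ij(1,2)] mult by blast
  have "Dop i j (Mf u v p) = (\<lambda>w.
    (\<Sum>k<length u. eps i j (u!k) * Mf (take k u @ map (sl i j) (drop (Suc k) u)) (map (sl i j) v) (\<lambda>x. p (map (sl i j) x)) w)
    + Mf u (map (sl i j) v) (Dop i j p) w
    + (\<Sum>k<length v. eps i j (v!k) * Mf u (take k v @ map (sl i j) (drop (Suc k) v)) p w))"
    by (rule ext) (rule D_Mf[OF fp])
  moreover have "fk_ideal n \<dots>"
    apply (rule ideal_add')
     apply (rule ideal_add')
      apply (rule ideal_sum, simp, rule ideal_smult', rule ideal_Mf, rule S)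
     apply (rule ideal_Mf, rule mult.IH)
    apply (rule ideal_sum, simp, rule ideal_smult', rule ideal_Mf, rule mult.hyps)
    done
  ultimately show ?case by (simp add: Mf_eq)
qed



lemma mult_unit_left: "fa_mult (fa_single [] 1) q = q"
  by (rule ext) (simp add: mult_single_left)

lemma mult_unit_right: "fa_mult q (fa_single [] 1) = q"
  by (rule ext) (simp add: mult_single_right)

lemma right_Mf: "fa_mult w (fa_gen i j) = Mf [] [(i, j)] w"
  using Mf_eq[of "[]" w "[(i,j)]"] by (simp add: mult_unit_left fa_gen_single)

lemma left_Mf: "fa_mult (fa_gen i j) w = Mf [(i, j)] [] w"
  using Mf_eq[of "[(i,j)]" w "[]"] by (simp add: mult_unit_right fa_gen_single)

lemma Mf_unit: "Mf [] [] w = w"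
  by (rule ext) (simp add: Mf_def)

lemma Mf_zero: "Mf u v (\<lambda>z. 0) = (\<lambda>z. 0)"
  by (rule ext) (simp add: Mf_def)

lemma right_case:
  assumes ij: "i \<in> {1..n}" "j \<in> {1..n}" "i \<noteq> j"
    and fw: "fa_finsupp w"
    and av: "\<And>u x. w u \<noteq> 0 \<Longrightarrow> x \<in> set u \<Longrightarrow> x \<noteq> (i, j) \<and> x \<noteq> (j, i)"
    and I: "fk_ideal n (fa_mult w (fa_gen i j))"
  shows "fk_ideal n w"
proof -
  have Dw: "Dop i j w = (\<lambda>z. 0)"
  proof (rule ext)
    fix z
    show "Dop i j w z = 0"
      unfolding Dop_def
    proof (rule sum.neutral, intro ballI)
      fix u assume u: "u \<in> {u. w u \<noteq> 0}"
      have "dv i j u [] [] z = 0"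
        unfolding dv_def
      proof (rule sum.neutral, intro ballI)
        fix k assume "k \<in> {..<length u}"
        then have "u ! k \<in> set u" by simp
        then have "eps i j (u ! k) = 0" using av[of u "u ! k"] u by (simp add: eps_def)
        then show "(if z = [] @ take k u @ map (sl i j) (drop (Suc k) u) @ [] then eps i j (u ! k) else 0) = 0" by simp
      qed
      then show "w u * dv i j u [] [] z = 0" by simp
    qed
  qed
  have "Dop i j (Mf [] [(i, j)] w) = w"
  proof (rule ext)
    fix z
    show "Dop i j (Mf [] [(i, j)] w) z = w z"
      using D_Mf[OF fw, of i j "[]" "[(i,j)]" z] ij(3)
      by (simp add: Dw Mf_zero Mf_unit eps_def)
  qed
  moreover have "fk_ideal n (Dop i j (Mf [] [(i, j)] w))"
    using D_ideal[OF ij] I by (simp add: right_Mf)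
  ultimately show ?thesis by simp
qed



lemma rw_set: "x \<in> set u \<Longrightarrow> (snd x, fst x) \<in> set (rw u)"
  by (force simp: rw_def)

theorem mainTheorem10:
  fixes n :: nat and E :: "nat \<Rightarrow> nat \<Rightarrow> bool" and w :: fa and i j :: nat
  assumes "simple_graph_on n E"
    and "in_EG E w"
    and "\<not> fk_ideal n w"
    and "i \<in> {1..n}" and "j \<in> {1..n}" and "i \<noteq> j"
    and "fk_ideal n (fa_mult (fa_gen i j) w) \<or> fk_ideal n (fa_mult w (fa_gen i j))"
  shows "E i j"
proof (rule ccontr)
  assume nE: "\<not> E i j"
  have sym: "\<And>a b. E a b \<Longrightarrow> E b a" using assms(1) by (simp add: simple_graph_on_def)
  have fw: "fa_finsupp w" using assms(2) by (simp add: in_EG_def)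
  have av: "\<And>u x. w u \<noteq> 0 \<Longrightarrow> x \<in> set u \<Longrightarrow> x \<noteq> (i, j) \<and> x \<noteq> (j, i)"
    using assms(2) nE sym unfolding in_EG_def by fastforce
  show False
  proof (cases "fk_ideal n (fa_mult w (fa_gen i j))")
    case True
    have "fk_ideal n w"
    proof (rule right_case[OF assms(4,5,6) fw])
      fix u x assume "w u \<noteq> 0" "x \<in> set u"
      then show "x \<noteq> (i, j) \<and> x \<noteq> (j, i)" by (rule av)
    qed (rule True)
    with assms(3) show False by simp
  next
    case False
    then have L: "fk_ideal n (fa_mult (fa_gen i j) w)" using assms(7) by blast
    define w' where "w' = (\<lambda>z. w (rw z))"
    have "fk_ideal n (\<lambda>z. fa_mult (fa_gen i j) w (rw z))" using R_ideal[OF L] .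
    also have "(\<lambda>z. fa_mult (fa_gen i j) w (rw z)) = fa_mult w' (fa_gen j i)"
      unfolding left_Mf right_Mf Mf_rw w'_def by simp
    finally have I': "fk_ideal n (fa_mult w' (fa_gen j i))" .
    have fw': "fa_finsupp w'"
    proof -
      have "{z. w' z \<noteq> 0} \<subseteq> rw ` {z. w z \<noteq> 0}"
        unfolding w'_def by (auto intro: image_eqI[where x="rw _"])
      then show ?thesis using fw unfolding fa_finsupp_def by (meson finite_imageI finite_subset)
    qed
    have av': "\<And>u x. w' u \<noteq> 0 \<Longrightarrow> x \<in> set u \<Longrightarrow> x \<noteq> (j, i) \<and> x \<noteq> (i, j)"
    proof -
      fix u x assume "w' u \<noteq> 0" "x \<in> set u"
      then have "w (rw u) \<noteq> 0" "(snd x, fst x) \<in> set (rw u)" by (auto simp: w'_def rw_set)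
      then show "x \<noteq> (j, i) \<and> x \<noteq> (i, j)" using av by fastforce
    qed
    have "fk_ideal n w'"
    proof (rule right_case[OF assms(5,4) _ fw'])
      fix u x assume "w' u \<noteq> 0" "x \<in> set u"
      then show "x \<noteq> (j, i) \<and> x \<noteq> (i, j)" by (rule av')
    qed (use I' assms(6) in auto)
    then have "fk_ideal n (\<lambda>z. w' (rw z))" by (rule R_ideal)
    then have "fk_ideal n w" by (simp add: w'_def)
    with assms(3) show False by simp
  qed
qed

end
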